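(* Let $p$ be an odd prime. If $M$ and $N$ are discrete $A$-modules and $f:M\to N$ is a $\mathbb{Z}_{(p)}$-homomorphism which commutes with the action of $\Psi^q$, then $f$ is a homomorphism of $A$-modules.
   Context: $A$ is the ring of degree zero stable operations in $p$-local complex $K$-theory. Fix $q$ primitive mod $p^2$, $\Psi^q\in A$ the Adams operation, $q_i=q^{(-1)^i\lfloor i/2\rfloor}$, $\Theta_n(X)=\prod_{i=1}^n(X-q_i)$, $\Phi_n=\Theta_n(\Psi^q)$; every element of $A$ is uniquely a convergent sum $\sum_{n\ge0}a_n\Phi_n$ with $a_n\in\mathbb{Z}_{(p)}$, and $A_m=\{\sum_{n\ge m}a_n\Phi_n\}$. An $A$-module $M$ is discrete if each $x\in M$ satisfies $A_nx=0$ for some $n$. *)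

theory Defs
  imports "HOL-Number_Theory.Number_Theory" "HOL-Computational_Algebra.Polynomial"
begin

definition Zp :: "nat \<Rightarrow> rat set" where
  "Zp p = {r. \<not> int p dvd snd (quotient_of r)}"

definition qi :: "nat \<Rightarrow> nat \<Rightarrow> rat" where
  "qi q i = (if even i then of_nat q ^ (i div 2) else inverse (of_nat q) ^ (i div 2))"

definition Theta :: "nat \<Rightarrow> nat \<Rightarrow> rat poly" where
  "Theta q n = (\<Prod>i=1..n. [: - qi q i, 1 :])"

text \<open>Elements of A are represented by their coefficient sequences
  a : nat \<Rightarrow> rat, standing for sum_n a_n Phi_n with a_n in Z_(p).\<close>
definition Acar :: "nat \<Rightarrow> (nat \<Rightarrow> rat) set" where
  "Acar p = {a. \<forall>n. a n \<in> Zp p}"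

definition Afilt :: "nat \<Rightarrow> nat \<Rightarrow> (nat \<Rightarrow> rat) set" where
  "Afilt p m = {a \<in> Acar p. \<forall>k<m. a k = 0}"

definition trunc_poly :: "nat \<Rightarrow> (nat \<Rightarrow> rat) \<Rightarrow> nat \<Rightarrow> rat poly" where
  "trunc_poly q a k = (\<Sum>n\<le>k. smult (a n) (Theta q n))"

text \<open>Ring structure of A: addition is coefficientwise; the Phi_k-coefficient
  of a product is the Theta_k-coefficient (in the Newton basis) of the product of
  the truncations modulo Theta_(k+1), i.e. computed in A/A_(k+1) = Z_(p)[X]/(Theta_(k+1)).\<close>
definition mulA :: "nat \<Rightarrow> (nat \<Rightarrow> rat) \<Rightarrow> (nat \<Rightarrow> rat) \<Rightarrow> (nat \<Rightarrow> rat)" where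
  "mulA q a b = (\<lambda>k. coeff ((trunc_poly q a k * trunc_poly q b k) mod Theta q (Suc k)) k)"

definition addA :: "(nat \<Rightarrow> rat) \<Rightarrow> (nat \<Rightarrow> rat) \<Rightarrow> (nat \<Rightarrow> rat)" where
  "addA a b = (\<lambda>k. a k + b k)"

definition scalA :: "rat \<Rightarrow> (nat \<Rightarrow> rat)" where
  "scalA r = (\<lambda>k. if k = 0 then r else 0)"

text \<open>The Adams operation Psi^q = Phi_1 + q_1 Phi_0 (q_1 = 1).\<close>
definition PsiA :: "nat \<Rightarrow> (nat \<Rightarrow> rat)" where
  "PsiA q = (\<lambda>k. if k = 0 then qi q 1 else if k = 1 then 1 else 0)"

definition A_module :: "nat \<Rightarrow> nat \<Rightarrow> ((nat \<Rightarrow> rat) \<Rightarrow> 'm::ab_group_add \<Rightarrow> 'm) \<Rightarrow> bool" where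
  "A_module p q act \<longleftrightarrow>
     (\<forall>a\<in>Acar p. \<forall>x y. act a (x + y) = act a x + act a y) \<and>
     (\<forall>a\<in>Acar p. \<forall>b\<in>Acar p. \<forall>x. act (addA a b) x = act a x + act b x) \<and>
     (\<forall>a\<in>Acar p. \<forall>b\<in>Acar p. \<forall>x. act (mulA q a b) x = act a (act b x)) \<and>
     (\<forall>x. act (scalA 1) x = x)"

definition discrete_A_module :: "nat \<Rightarrow> nat \<Rightarrow> ((nat \<Rightarrow> rat) \<Rightarrow> 'm::ab_group_add \<Rightarrow> 'm) \<Rightarrow> bool" where
  "discrete_A_module p q act \<longleftrightarrow>
     A_module p q act \<and> (\<forall>x. \<exists>n. \<forall>a\<in>Afilt p n. act a x = 0)"

end

theory Submission
  imports Defs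
begin

lemma Zp_iff:
  assumes "prime p"
  shows "r \<in> Zp p \<longleftrightarrow> (\<exists>a b. b \<noteq> 0 \<and> \<not> int p dvd b \<and> r = of_int a / of_int b)"
proof
  assume "r \<in> Zp p"
  obtain n d where nd: "quotient_of r = (n, d)" by (cases "quotient_of r")
  then show "\<exists>a b. b \<noteq> 0 \<and> \<not> int p dvd b \<and> r = of_int a / of_int b"
    using \<open>r \<in> Zp p\<close> quotient_of_div[OF nd] quotient_of_denom_pos[OF nd]
    by (intro exI[of _ n] exI[of _ d]) (auto simp: Zp_def)
next
  assume "\<exists>a b. b \<noteq> 0 \<and> \<not> int p dvd b \<and> r = of_int a / of_int b"
  then obtain a b where ab: "b \<noteq> 0" "\<not> int p dvd b" "r = of_int a / of_int b" by blast
  obtain n d where nd: "quotient_of r = (n, d)" by (cases "quotient_of r")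
  have r: "r = of_int n / of_int d" using quotient_of_div[OF nd] .
  have d0: "d > 0" using quotient_of_denom_pos[OF nd] .
  have cp: "coprime n d" using quotient_of_coprime[OF nd] .
  have "(of_int a :: rat) * of_int d = of_int n * of_int b"
    using ab r d0 by (simp add: field_simps)
  then have "a * d = n * b" by (metis of_int_eq_iff of_int_mult)
  then have "d dvd n * b" by (metis dvd_triv_right)
  then have "d dvd b" using cp by (meson coprime_commute coprime_dvd_mult_right_iff)
  then have "\<not> int p dvd d" using ab(2) dvd_trans by blast
  then show "r \<in> Zp p" by (simp add: Zp_def nd)
qed

lemma Zp_add:
  assumes "prime p" "r \<in> Zp p" "s \<in> Zp p" shows "r + s \<in> Zp p"
proof -
  obtain a b where ab: "b \<noteq> 0" "\<not> int p dvd b" "r = of_int a / of_int b"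
    using assms Zp_iff by blast
  obtain c d where cd: "d \<noteq> 0" "\<not> int p dvd d" "s = of_int c / of_int d"
    using assms Zp_iff by blast
  have "r + s = of_int (a * d + c * b) / of_int (b * d)"
    using ab cd by (simp add: field_simps)
  moreover have "\<not> int p dvd b * d"
    using ab cd assms(1) by (simp add: prime_dvd_mult_iff)
  moreover have "b * d \<noteq> 0" using ab cd by simp
  ultimately show ?thesis using Zp_iff[OF assms(1)] by blast
qed

lemma Zp_uminus:
  assumes "prime p" "r \<in> Zp p" shows "- r \<in> Zp p"
proof -
  obtain a b where ab: "b \<noteq> 0" "\<not> int p dvd b" "r = of_int a / of_int b"
    using assms Zp_iff by blast
  have "- r = of_int (- a) / of_int b" using ab by simp
  then show ?thesis using ab Zp_iff[OF assms(1)] by blast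
qed

lemma Zp_int:
  assumes "prime p" shows "of_int a \<in> Zp p"
proof -
  have "(of_int a :: rat) = of_int a / of_int 1" by simp
  moreover have "\<not> int p dvd 1" using assms by (simp, metis One_nat_def not_prime_1)
  ultimately show ?thesis using Zp_iff[OF assms] by (metis one_neq_zero)
qed

lemma Zp_0: "prime p \<Longrightarrow> 0 \<in> Zp p" using Zp_int[of p 0] by simp
lemma Zp_1: "prime p \<Longrightarrow> 1 \<in> Zp p" using Zp_int[of p 1] by simp

lemma Zp_qi:
  assumes "prime p" "\<not> p dvd q" shows "qi q i \<in> Zp p"
proof (cases "even i")
  case True
  then have "qi q i = of_int (int q ^ (i div 2))" by (simp add: qi_def)
  then show ?thesis using Zp_int[OF assms(1), of "int q ^ (i div 2)"] by simp
next
  case False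
  then have e: "qi q i = of_int 1 / of_int (int q ^ (i div 2))"
    by (simp add: qi_def power_one_over divide_inverse power_inverse)
  have "\<not> int p dvd int q ^ (i div 2)"
    using assms by (metis int_dvd_int_iff of_nat_power prime_dvd_power prime_nat_int_transfer)
  moreover have "int q ^ (i div 2) \<noteq> 0" using assms by (metis dvd_0_right of_nat_eq_0_iff power_not_zero)
  ultimately show ?thesis using e Zp_iff[OF assms(1)] by blast
qed

lemma Theta_0: "Theta q 0 = 1" by (simp add: Theta_def)
lemma Theta_Suc: "Theta q (Suc n) = Theta q n * [:- qi q (Suc n), 1:]"
  by (simp add: Theta_def prod.cl_ivl_Suc)
lemma qi_1 [simp]: "qi q (Suc 0) = 1" by (simp add: qi_def)
lemma Theta_1: "Theta q (Suc 0) = [:-1, 1:]"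
  using Theta_Suc[of q 0] by (simp add: Theta_0 qi_1)

lemma Theta_deg: "degree (Theta q n) = n \<and> coeff (Theta q n) n = 1"
proof (induction n)
  case 0 then show ?case by (simp add: Theta_0)
next
  case (Suc n)
  have nz: "Theta q n \<noteq> 0" using Suc by auto
  have "degree (Theta q n * [:- qi q (Suc n), 1:]) = degree (Theta q n) + degree [:- qi q (Suc n), 1:]"
    by (rule degree_mult_eq) (use nz in auto)
  then have "degree (Theta q (Suc n)) = Suc n"
    unfolding Theta_Suc using Suc by simp
  moreover have "coeff (Theta q (Suc n)) (Suc n) = 1"
    using lead_coeff_mult[of "Theta q n" "[:- qi q (Suc n), 1:]"] Suc
    unfolding Theta_Suc[symmetric] calculation by simp
  ultimately show ?case by simp
qed

definition Ek :: "nat \<Rightarrow> rat \<Rightarrow> nat \<Rightarrow> rat" where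
  "Ek k c = (\<lambda>n. if n = k then c else 0)"

lemma trunc_Ek: "trunc_poly q (Ek k c) j = (if k \<le> j then smult c (Theta q k) else 0)"
proof -
  have "trunc_poly q (Ek k c) j = (\<Sum>n\<le>j. if n = k then smult c (Theta q n) else 0)"
    unfolding trunc_poly_def Ek_def by (intro sum.cong) auto
  also have "\<dots> = (if k \<le> j then smult c (Theta q k) else 0)"
    by (subst sum.delta) auto
  finally show ?thesis .
qed

lemma scalA_Ek: "scalA c = Ek 0 c" by (simp add: scalA_def Ek_def fun_eq_iff)

lemma trunc_scal: "trunc_poly q (scalA c) j = [:c:]"
  by (simp add: scalA_Ek trunc_Ek Theta_0)

lemma trunc_add: "trunc_poly q (\<lambda>n. a n + b n) j = trunc_poly q a j + trunc_poly q b j"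
  by (simp add: trunc_poly_def smult_add_left sum.distrib)

definition Pr :: "nat \<Rightarrow> rat \<Rightarrow> nat \<Rightarrow> rat" where
  "Pr q r = addA (PsiA q) (scalA (- r))"

lemma Pr_split: "Pr q r = (\<lambda>n. Ek 0 (1 - r) n + Ek 1 1 n)"
  by (auto simp: Pr_def addA_def PsiA_def scalA_def Ek_def qi_1 fun_eq_iff)

lemma trunc_Pr0: "trunc_poly q (Pr q r) 0 = [:1 - r:]"
  unfolding Pr_split trunc_add by (simp add: trunc_Ek Theta_0)

lemma trunc_Pr: "j \<ge> 1 \<Longrightarrow> trunc_poly q (Pr q r) j = [:- r, 1:]"
  unfolding Pr_split trunc_add by (simp add: trunc_Ek Theta_0 Theta_1)

lemma coeff_Theta: "coeff (Theta q k) j = (if j = k then 1 else 0)" if "k \<le> j"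
  using Theta_deg[of q k] that by (auto intro: coeff_eq_0)

lemma mul_scal_Ek: "mulA q (scalA c) (Ek k 1) = Ek k c"
proof
  fix j
  show "mulA q (scalA c) (Ek k 1) j = Ek k c j"
  proof (cases "k \<le> j")
    case True
    have "degree (smult c (Theta q k)) < degree (Theta q (Suc j))"
      using Theta_deg[of q k] Theta_deg[of q "Suc j"] True degree_smult_le[of c "Theta q k"]
      by simp
    moreover have "trunc_poly q (scalA c) j * trunc_poly q (Ek k 1) j = smult c (Theta q k)"
      using True by (simp add: trunc_scal trunc_Ek)
    ultimately have "mulA q (scalA c) (Ek k 1) j = coeff (smult c (Theta q k)) j"
      by (simp add: mulA_def mod_poly_less)
    then show ?thesis using True by (simp add: coeff_Theta Ek_def)
  next
    case False
    then have "trunc_poly q (Ek k 1) j = 0" by (simp add: trunc_Ek)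
    then show ?thesis using False by (simp add: mulA_def Ek_def)
  qed
qed

lemma mul_Pr_Ek: "mulA q (Pr q (qi q (Suc k))) (Ek k 1) = Ek (Suc k) 1"
proof
  fix j
  show "mulA q (Pr q (qi q (Suc k))) (Ek k 1) j = Ek (Suc k) 1 j"
  proof (cases "k \<le> j")
    case False
    then have "trunc_poly q (Ek k 1) j = 0" by (simp add: trunc_Ek)
    then show ?thesis using False by (simp add: mulA_def Ek_def)
  next
    case True
    show ?thesis
    proof (cases "j = 0")
      case True
      then have "k = 0" using \<open>k \<le> j\<close> by simp
      then show ?thesis using True by (simp add: mulA_def trunc_Ek trunc_Pr0 Ek_def qi_1)
    next
      case False
      then have prod: "trunc_poly q (Pr q (qi q (Suc k))) j * trunc_poly q (Ek k 1) j = Theta q (Suc k)"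
        using \<open>k \<le> j\<close> by (simp add: trunc_Pr trunc_Ek Theta_Suc mult.commute)
      show ?thesis
      proof (cases "j = k")
        case True
        then show ?thesis using prod by (simp add: mulA_def Ek_def)
      next
        case False
        then have "degree (Theta q (Suc k)) < degree (Theta q (Suc j))"
          using Theta_deg[of q "Suc k"] Theta_deg[of q "Suc j"] \<open>k \<le> j\<close> by simp
        then show ?thesis using prod False \<open>k \<le> j\<close>
          by (simp add: mulA_def mod_poly_less coeff_Theta Ek_def)
      qed
    qed
  qed
qed

lemma Ek_Acar: "c \<in> Zp p \<Longrightarrow> prime p \<Longrightarrow> Ek k c \<in> Acar p"
  by (auto simp: Ek_def Acar_def Zp_0)

theorem lemma2p6:
  fixes p q :: nat
    and actM :: "(nat \<Rightarrow> rat) \<Rightarrow> 'm::ab_group_add \<Rightarrow> 'm"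
    and actN :: "(nat \<Rightarrow> rat) \<Rightarrow> 'n::ab_group_add \<Rightarrow> 'n"
    and f :: "'m \<Rightarrow> 'n"
  assumes "prime p" and "odd p"
    and "residue_primroot (p^2) q"
    and "discrete_A_module p q actM"
    and "discrete_A_module p q actN"
    and "\<And>x y. f (x + y) = f x + f y"
    and "\<And>r x. r \<in> Zp p \<Longrightarrow> f (actM (scalA r) x) = actN (scalA r) (f x)"
    and "\<And>x. f (actM (PsiA q) x) = actN (PsiA q) (f x)"
  shows "\<forall>a\<in>Acar p. \<forall>x. f (actM a x) = actN a (f x)"
proof -
  note pr = assms(1)
  have nq: "\<not> p dvd q"
  proof
    assume "p dvd q"
    moreover have "coprime (p^2) q" using assms(3) by (simp add: residue_primroot_def)
    ultimately have "coprime p p"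
      by (metis coprime_commute coprime_mult_left_iff coprime_mult_right_iff dvd_def power2_eq_square)
    then show False using pr by (simp add: prime_gt_1_nat)
  qed
  have M_add: "\<And>a b x. a \<in> Acar p \<Longrightarrow> b \<in> Acar p \<Longrightarrow> actM (addA a b) x = actM a x + actM b x"
    using assms(4) by (simp add: discrete_A_module_def A_module_def)
  have M_mul: "\<And>a b x. a \<in> Acar p \<Longrightarrow> b \<in> Acar p \<Longrightarrow> actM (mulA q a b) x = actM a (actM b x)"
    using assms(4) by (simp add: discrete_A_module_def A_module_def)
  have M_disc: "\<And>x. \<exists>n. \<forall>a\<in>Afilt p n. actM a x = 0"
    using assms(4) by (simp add: discrete_A_module_def)
  have N_add: "\<And>a b x. a \<in> Acar p \<Longrightarrow> b \<in> Acar p \<Longrightarrow> actN (addA a b) x = actN a x + actN b x"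
    using assms(5) by (simp add: discrete_A_module_def A_module_def)
  have N_mul: "\<And>a b x. a \<in> Acar p \<Longrightarrow> b \<in> Acar p \<Longrightarrow> actN (mulA q a b) x = actN a (actN b x)"
    using assms(5) by (simp add: discrete_A_module_def A_module_def)
  have N_disc: "\<And>x. \<exists>n. \<forall>a\<in>Afilt p n. actN a x = 0"
    using assms(5) by (simp add: discrete_A_module_def)
  define G where "G = {b \<in> Acar p. \<forall>x. f (actM b x) = actN b (f x)}"
  have G_add: "addA b c \<in> G" if "b \<in> G" "c \<in> G" "addA b c \<in> Acar p" for b c
    using that M_add N_add assms(6) by (simp add: G_def)
  have G_mul: "mulA q b c \<in> G" if "b \<in> G" "c \<in> G" "mulA q b c \<in> Acar p" for b c
    using that M_mul N_mul by (simp add: G_def)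
  have G_scal: "scalA r \<in> G" if "r \<in> Zp p" for r
    using that assms(7) pr by (auto simp: G_def Acar_def scalA_def Zp_0)
  have G_Psi: "PsiA q \<in> G"
    using assms(8) pr by (auto simp: G_def Acar_def PsiA_def Zp_0 Zp_1)
  have G_Pr: "Pr q r \<in> G" if "r \<in> Zp p" for r
  proof -
    have "1 + - r \<in> Zp p" using Zp_add[OF pr Zp_1[OF pr] Zp_uminus[OF pr that]] .
    then have "Pr q r \<in> Acar p"
      using that pr by (auto simp: Pr_split Acar_def Ek_def Zp_0 Zp_1 Zp_add Zp_uminus)
    then show ?thesis unfolding Pr_def
      using G_add G_Psi G_scal Zp_uminus[OF pr that] Pr_def by metis
  qed
  have G_E1: "Ek k 1 \<in> G" for k
  proof (induction k)
    case 0 then show ?case using G_scal[OF Zp_1[OF pr]] by (simp add: scalA_Ek)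
  next
    case (Suc k)
    then show ?case
      using G_mul[OF G_Pr[OF Zp_qi[OF pr nq, of "Suc k"]] Suc] mul_Pr_Ek[of q k]
        Ek_Acar[OF Zp_1[OF pr] pr, of "Suc k"] by simp
  qed
  have G_E: "Ek k c \<in> G" if "c \<in> Zp p" for k c
    using G_mul[OF G_scal[OF that] G_E1[of k]] mul_scal_Ek[of q c k] Ek_Acar[OF that pr] by simp
  define T where "T n a = (\<lambda>k. if k < n then a k else (0::rat))" for n and a :: "nat \<Rightarrow> rat"
  have G_T: "T n a \<in> G" if a: "a \<in> Acar p" for n a
  proof (induction n)
    case 0
    have "T 0 a = scalA 0" by (simp add: T_def scalA_def fun_eq_iff)
    then show ?case using G_scal[OF Zp_0[OF pr]] by simp
  next
    case (Suc n)
    have e: "T (Suc n) a = addA (T n a) (Ek n (a n))"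
      by (auto simp: T_def addA_def Ek_def fun_eq_iff)
    have "T (Suc n) a \<in> Acar p" using a pr by (auto simp: T_def Acar_def Zp_0)
    then show ?case using G_add[OF Suc G_E] a e by (simp add: Acar_def)
  qed
  show ?thesis
  proof (intro ballI allI)
    fix a x assume a: "a \<in> Acar p"
    obtain n1 where n1: "\<forall>b\<in>Afilt p n1. actM b x = 0" using M_disc by blast
    obtain n2 where n2: "\<forall>b\<in>Afilt p n2. actN b (f x) = 0" using N_disc by blast
    define n where "n = max n1 n2"
    define R where "R = (\<lambda>k. if k < n then 0 else a k)"
    have R1: "R \<in> Afilt p n1" and R2: "R \<in> Afilt p n2"
      using a pr by (auto simp: R_def Afilt_def Acar_def n_def Zp_0)
    have RA: "R \<in> Acar p" using R1 by (simp add: Afilt_def)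
    have TA: "T n a \<in> Acar p" using G_T[OF a] by (simp add: G_def)
    have ae: "a = addA (T n a) R" by (auto simp: T_def R_def addA_def fun_eq_iff)
    have "f (actM a x) = f (actM (T n a) x + actM R x)"
      using M_add[OF TA RA] ae by simp
    also have "\<dots> = f (actM (T n a) x)" using n1 R1 by simp
    also have "\<dots> = actN (T n a) (f x)" using G_T[OF a] by (simp add: G_def)
    also have "\<dots> = actN (T n a) (f x) + actN R (f x)" using n2 R2 by simp
    also have "\<dots> = actN a (f x)" using N_add[OF TA RA] ae by simp
    finally show "f (actM a x) = actN a (f x)" .
  qed
qed

end
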